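(* Let $p\ge2$ be an integer and consider the $p$-Pass algorithm run with arbitrary orderings of $V$ in each pass. For every $1\le i\le p-1$ and every $\alpha\ge0$: if $\sum_{j=1}^ik_j\ge k\big(\frac ip+\alpha\big)$, then $$f(S_i)\ge\Big(1-\big(\tfrac{p}{p+1}\big)^i+\alpha\big(\tfrac{p}{p+1}\big)^{i+1}\Big)\mathrm{OPT}.$$
   Context: $V$ is a finite ground set with $|V|=n$; $f:2^V\to\mathbb{R}_{\ge0}$ is monotone, submodular and normalized; $f(e\mid Y)=f(Y\cup\{e\})-f(Y)$. $k\le n$ is a positive integer and $\mathrm{OPT}=\max\{f(S):S\subseteq V,|S|\le k\}$. $p$-Pass algorithm (knows $\mathrm{OPT}$): start with $S=\emptyset$; for $i=1,\dots,p$, make a pass over all elements of $V$ (in some order) and add each element $e$ to $S$ if $|S|<k$ and $f(e\mid S)\ge(\frac{p}{p+1})^i\cdot\frac{\mathrm{OPT}}{k}$; return $S$. $S_i$ denotes the set $S$ after the $i$-th pass ($S_0=\emptyset$) and $k_i=|S_i\setminus S_{i-1}|$. *)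

theory Defs
  imports Complex_Main
begin

definition monotone_set_fn :: "'a set \<Rightarrow> ('a set \<Rightarrow> real) \<Rightarrow> bool" where
  "monotone_set_fn V f \<longleftrightarrow> (\<forall>A B. A \<subseteq> B \<and> B \<subseteq> V \<longrightarrow> f A \<le> f B)"

definition submodular_set_fn :: "'a set \<Rightarrow> ('a set \<Rightarrow> real) \<Rightarrow> bool" where
  "submodular_set_fn V f \<longleftrightarrow>
     (\<forall>A B. A \<subseteq> V \<and> B \<subseteq> V \<longrightarrow> f (A \<union> B) + f (A \<inter> B) \<le> f A + f B)"

definition marg :: "('a set \<Rightarrow> real) \<Rightarrow> 'a \<Rightarrow> 'a set \<Rightarrow> real" where
  "marg f e Y = f (Y \<union> {e}) - f Y"

definition OPT :: "'a set \<Rightarrow> ('a set \<Rightarrow> real) \<Rightarrow> nat \<Rightarrow> real" where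
  "OPT V f k = Max (f ` {S. S \<subseteq> V \<and> card S \<le> k})"

definition pass_step :: "('a set \<Rightarrow> real) \<Rightarrow> nat \<Rightarrow> real \<Rightarrow> 'a \<Rightarrow> 'a set \<Rightarrow> 'a set" where
  "pass_step f k tau e S = (if card S < k \<and> marg f e S \<ge> tau then S \<union> {e} else S)"

definition run_pass :: "('a set \<Rightarrow> real) \<Rightarrow> nat \<Rightarrow> real \<Rightarrow> 'a list \<Rightarrow> 'a set \<Rightarrow> 'a set" where
  "run_pass f k tau xs S = fold (pass_step f k tau) xs S"

text \<open>S_i of the p-Pass algorithm (knowing OPT); ord i is the ordering used in pass i.\<close>
fun pPass_S :: "'a set \<Rightarrow> ('a set \<Rightarrow> real) \<Rightarrow> nat \<Rightarrow> nat \<Rightarrow> (nat \<Rightarrow> 'a list) \<Rightarrow> nat \<Rightarrow> 'a set" where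
  "pPass_S V f k p ord 0 = {}"
| "pPass_S V f k p ord (Suc i) =
     run_pass f k ((real p / (real p + 1)) ^ Suc i * OPT V f k / real k) (ord (Suc i))
       (pPass_S V f k p ord i)"

definition pPass_k :: "'a set \<Rightarrow> ('a set \<Rightarrow> real) \<Rightarrow> nat \<Rightarrow> nat \<Rightarrow> (nat \<Rightarrow> 'a list) \<Rightarrow> nat \<Rightarrow> nat" where
  "pPass_k V f k p ord i = card (pPass_S V f k p ord i - pPass_S V f k p ord (i - 1))"

end

theory Submission
  imports Defs
begin

lemma pass_mono: "S \<subseteq> run_pass f k \<tau> xs S"
proof (induction xs arbitrary: S)
  case Nil then show ?case by (simp add: run_pass_def)
next
  case (Cons x xs)
  have "S \<subseteq> pass_step f k \<tau> x S" by (auto simp: pass_step_def)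
  moreover have "run_pass f k \<tau> (x#xs) S = run_pass f k \<tau> xs (pass_step f k \<tau> x S)"
    by (simp add: run_pass_def)
  ultimately show ?case using Cons.IH by blast
qed

lemma pass_sub: "run_pass f k \<tau> xs S \<subseteq> S \<union> set xs"
proof (induction xs arbitrary: S)
  case Nil then show ?case by (simp add: run_pass_def)
next
  case (Cons x xs)
  have "pass_step f k \<tau> x S \<subseteq> insert x S" by (auto simp: pass_step_def)
  moreover have "run_pass f k \<tau> (x#xs) S = run_pass f k \<tau> xs (pass_step f k \<tau> x S)"
    by (simp add: run_pass_def)
  ultimately show ?case using Cons.IH[of "pass_step f k \<tau> x S"] by auto
qed

lemma pass_full: "k \<le> card S \<Longrightarrow> run_pass f k \<tau> xs S = S"
  by (induction xs) (auto simp: run_pass_def pass_step_def)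

lemma pass_gain:
  assumes "finite S"
  shows "f (run_pass f k \<tau> xs S) \<ge> f S + real (card (run_pass f k \<tau> xs S - S)) * \<tau>"
  using assms
proof (induction xs arbitrary: S)
  case Nil show ?case by (simp add: run_pass_def)
next
  case (Cons e xs)
  define S' where "S' = pass_step f k \<tau> e S"
  have rp: "run_pass f k \<tau> (e#xs) S = run_pass f k \<tau> xs S'" by (simp add: run_pass_def S'_def)
  have fS': "finite S'" using Cons.prems by (simp add: S'_def pass_step_def)
  note IH = Cons.IH[OF fS']
  have s1: "S \<subseteq> S'" "S' \<subseteq> insert e S" by (auto simp: S'_def pass_step_def)
  have g1: "f S' \<ge> f S + real (card (S' - S)) * \<tau>"
  proof (cases "S' = S")
    case True then show ?thesis by simp
  next
    case False
    then have h: "e \<notin> S" "S' = S \<union> {e}" "marg f e S \<ge> \<tau>"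
      by (auto simp: S'_def pass_step_def split: if_splits)
    hence "S' - S = {e}" by auto
    thus ?thesis using h by (simp add: marg_def)
  qed
  let ?R = "run_pass f k \<tau> xs S'"
  have m: "S' \<subseteq> ?R" by (rule pass_mono)
  have fR: "finite ?R" using pass_sub[of f k \<tau> xs S'] fS' finite_subset by blast
  have "?R - S = (?R - S') \<union> (S' - S)" using m s1 by auto
  moreover have "(?R - S') \<inter> (S' - S) = {}" by auto
  ultimately have "card (?R - S) = card (?R - S') + card (S' - S)"
    using fR fS' by (simp add: card_Un_disjoint)
  then show ?case using IH g1 rp by (simp add: distrib_right)
qed

lemma pass_reject:
  "e \<in> set xs \<Longrightarrow> e \<notin> run_pass f k \<tau> xs S \<Longrightarrow>
    \<exists>S'. S \<subseteq> S' \<and> S' \<subseteq> run_pass f k \<tau> xs S \<and> \<not> (card S' < k \<and> marg f e S' \<ge> \<tau>)"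
proof (induction xs arbitrary: S)
  case Nil then show ?case by simp
next
  case (Cons x xs)
  have rp: "run_pass f k \<tau> (x#xs) S = run_pass f k \<tau> xs (pass_step f k \<tau> x S)"
    by (simp add: run_pass_def)
  have s: "S \<subseteq> pass_step f k \<tau> x S" by (auto simp: pass_step_def)
  show ?case
  proof (cases "e \<in> set xs")
    case True
    have "e \<notin> run_pass f k \<tau> xs (pass_step f k \<tau> x S)" using Cons.prems(2) rp by simp
    from Cons.IH[OF True this] obtain S' where
      "pass_step f k \<tau> x S \<subseteq> S'" "S' \<subseteq> run_pass f k \<tau> xs (pass_step f k \<tau> x S)"
      "\<not> (card S' < k \<and> marg f e S' \<ge> \<tau>)" by auto
    then show ?thesis using s rp by (metis order_trans)
  next
    case False
    then have ex: "e = x" using Cons.prems(1) by simp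
    have m: "pass_step f k \<tau> x S \<subseteq> run_pass f k \<tau> (x#xs) S" using rp pass_mono by metis
    have "\<not> (card S < k \<and> marg f e S \<ge> \<tau>)"
    proof
      assume "card S < k \<and> marg f e S \<ge> \<tau>"
      then have "e \<in> pass_step f k \<tau> x S" using ex by (simp add: pass_step_def)
      then show False using m Cons.prems(2) by auto
    qed
    then show ?thesis using s m by blast
  qed
qed

lemma marg_anti:
  assumes mono: "monotone_set_fn V f" and sub: "submodular_set_fn V f"
    and "A \<subseteq> B" "B \<subseteq> V" "e \<in> V"
  shows "marg f e B \<le> marg f e A"
proof (cases "e \<in> B")
  case True
  then have "B \<union> {e} = B" by auto
  moreover have "A \<union> {e} \<subseteq> V" using assms by auto
  moreover have "f A \<le> f (A \<union> {e})" using mono calculation(2) unfolding monotone_set_fn_def by blast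
  ultimately show ?thesis by (simp add: marg_def)
next
  case False
  have "(A \<union> {e}) \<union> B = B \<union> {e}" using assms by auto
  moreover have "(A \<union> {e}) \<inter> B = A" using assms False by auto
  moreover have "A \<union> {e} \<subseteq> V" using assms by auto
  ultimately have "f (B \<union> {e}) + f A \<le> f (A \<union> {e}) + f B"
    using sub assms unfolding submodular_set_fn_def by metis
  then show ?thesis by (simp add: marg_def)
qed

lemma sum_bound:
  assumes mono: "monotone_set_fn V f" and sub: "submodular_set_fn V f"
    and "finite T" "T \<subseteq> V" "S \<subseteq> V"
  shows "f (S \<union> T) \<le> f S + (\<Sum>e\<in>T. marg f e S)"
  using assms(3,4)
proof (induction T rule: finite_induct)
  case empty then show ?case by simp
next
  case (insert x T)
  have "f (S \<union> insert x T) = f (S \<union> T) + marg f x (S \<union> T)"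
    by (simp add: marg_def Un_insert_right)
  also have "marg f x (S \<union> T) \<le> marg f x S"
    using marg_anti[OF mono sub, of S "S \<union> T" x] insert assms by auto
  finally show ?case using insert by simp
qed

lemma alg1:
  fixes q r Q W x \<alpha> :: real
  assumes h: "q + r * q = 1" and "q \<le> 1" "Q \<ge> 0" "W \<ge> 0" "x - r \<le> \<alpha>"
  shows "(1 - Q + (\<alpha> - (x - r)) * Q) * W + x * (Q * q) * W
     \<ge> (1 - Q * q + \<alpha> * (Q * q)) * W"
proof -
  have "(1 - Q + (\<alpha> - (x - r)) * Q) * W + x * (Q * q) * W
     - (1 - Q * q + \<alpha> * (Q * q)) * W
     = Q * W * ((\<alpha> - x + r) * (1 - q)) + Q * W * (q + r * q - 1)"
    by (simp add: algebra_simps)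
  also have "\<dots> = Q * W * ((\<alpha> - x + r) * (1 - q))" using h by simp
  also have "\<dots> \<ge> 0" using assms by simp
  finally show ?thesis by simp
qed

lemma alg2:
  fixes q r Q W x \<alpha> :: real
  assumes h: "q + r * q = 1" and "q \<ge> 0" "Q \<ge> 0" "W \<ge> 0" "x - r \<ge> \<alpha>"
  shows "(1 - Q) * W + x * (Q * q) * W
     \<ge> (1 - Q * q + \<alpha> * (Q * q)) * W"
proof -
  have "(1 - Q) * W + x * (Q * q) * W
     - (1 - Q * q + \<alpha> * (Q * q)) * W
     = Q * W * ((x - r - \<alpha>) * q) + Q * W * (q + r * q - 1)"
    by (simp add: algebra_simps)
  also have "\<dots> = Q * W * ((x - r - \<alpha>) * q)" using h by simp
  also have "\<dots> \<ge> 0" using assms by simp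
  finally show ?thesis by simp
qed

theorem mainTheorem18:
  fixes V :: "'a set" and f :: "'a set \<Rightarrow> real" and k p i :: nat
    and ord :: "nat \<Rightarrow> 'a list" and \<alpha> :: real
  assumes "finite V"
    and "\<forall>S. S \<subseteq> V \<longrightarrow> f S \<ge> 0"
    and "monotone_set_fn V f" and "submodular_set_fn V f" and "f {} = 0"
    and "0 < k" and "k \<le> card V"
    and "2 \<le> p"
    and "\<forall>j. 1 \<le> j \<and> j \<le> p \<longrightarrow> distinct (ord j) \<and> set (ord j) = V"
    and "1 \<le> i" and "i \<le> p - 1"
    and "0 \<le> \<alpha>"
    and "real (\<Sum>j=1..i. pPass_k V f k p ord j) \<ge> real k * (real i / real p + \<alpha>)"
  shows "f (pPass_S V f k p ord i) \<ge>
    (1 - (real p / (real p + 1)) ^ i + \<alpha> * (real p / (real p + 1)) ^ (i + 1)) * OPT V f k"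
  proof -
  note A = assms
  define q where "q = real p / (real p + 1)"
  define W where "W = OPT V f k"
  define S where "S = pPass_S V f k p ord"
  define kk where "kk = pPass_k V f k p ord"
  define \<tau> where "\<tau> = (\<lambda>j. q ^ j * W / real k)"
  have Ssuc: "\<And>j. S (Suc j) = run_pass f k (\<tau> (Suc j)) (ord (Suc j)) (S j)"
    by (simp add: S_def \<tau>_def q_def W_def)
  have kksuc: "\<And>j. kk (Suc j) = card (S (Suc j) - S j)"
    by (simp add: kk_def S_def pPass_k_def)
  have SV: "S j \<subseteq> V" if "j \<le> p" for j
    using that
  proof (induction j)
    case 0 then show ?case by (simp add: S_def)
  next
    case (Suc j)
    have "S (Suc j) \<subseteq> S j \<union> set (ord (Suc j))" using Ssuc pass_sub by metis
    moreover have "set (ord (Suc j)) = V" using A(9) Suc.prems by auto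
    ultimately show ?case using Suc by auto
  qed
  have fin: "finite (S j)" if "j \<le> p" for j using SV[OF that] A(1) finite_subset by blast
  have gain: "f (S (Suc j)) \<ge> f (S j) + real (kk (Suc j)) * \<tau> (Suc j)" if "j < p" for j
    using pass_gain[OF fin, of j f k "\<tau> (Suc j)" "ord (Suc j)"] that Ssuc kksuc by simp
  have full: "kk (Suc j) = 0" if "k \<le> card (S j)" for j
    using Ssuc kksuc pass_full[OF that] by simp
  define F where "F = {T. T \<subseteq> V \<and> card T \<le> k}"
  have finF: "finite F" unfolding F_def using A(1) by simp
  have eF: "{} \<in> F" unfolding F_def by simp
  have WM: "W = Max (f ` F)" by (simp add: W_def OPT_def F_def)
  have W0: "W \<ge> 0" using WM finF eF A(5) by (metis Max_ge finite_imageI image_eqI)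
  obtain Opt where Opt: "Opt \<subseteq> V" "card Opt \<le> k" "f Opt = W"
  proof -
    have "f ` F \<noteq> {}" using eF by auto
    then have "W \<in> f ` F" using WM finF Max_in[of "f ` F"] by simp
    then show ?thesis using that unfolding F_def by auto
  qed
  have kpos: "real k > 0" using A(6) by simp
  have pge: "real p \<ge> 2" using A(8) by simp
  have q0: "q \<ge> 0" "q \<le> 1" using pge by (auto simp: q_def)
  have qr: "q + (1 / real p) * q = 1" using pge by (simp add: q_def field_simps)
  have tau0: "\<tau> j \<ge> 0" for j using q0 W0 kpos by (simp add: \<tau>_def)
  have ktau: "real k * \<tau> j = q ^ j * W" for j using kpos by (simp add: \<tau>_def)
  have F2: "f (S l) \<ge> (1 - q^l) * W" if "l \<le> p" "card (S l) < k" for l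
  proof (cases l)
    case 0 then show ?thesis using A(5) by (simp add: S_def)
  next
    case (Suc j)
    define T where "T = Opt - S l"
    have fT: "finite T" "T \<subseteq> V" using Opt A(1) finite_subset unfolding T_def by auto
    have SlV: "S l \<subseteq> V" using SV that by simp
    have "W = f Opt" using Opt by simp
    also have "f Opt \<le> f (S l \<union> T)"
      using A(3) Opt SlV unfolding monotone_set_fn_def T_def by auto
    also have "f (S l \<union> T) \<le> f (S l) + (\<Sum>e\<in>T. marg f e (S l))"
      by (rule sum_bound[OF A(3) A(4) fT SlV])
    also have "(\<Sum>e\<in>T. marg f e (S l)) \<le> (\<Sum>e\<in>T. \<tau> l)"
    proof (rule sum_mono)
      fix e assume eT: "e \<in> T"
      have eV: "e \<in> V" using eT fT by auto
      have so: "set (ord l) = V" using A(9) that Suc by auto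
      have "e \<notin> run_pass f k (\<tau> l) (ord l) (S j)" using eT Ssuc Suc unfolding T_def by auto
      then obtain S' where S': "S j \<subseteq> S'" "S' \<subseteq> S l" "\<not> (card S' < k \<and> marg f e S' \<ge> \<tau> l)"
        using pass_reject[of e "ord l"] eV so Ssuc Suc by metis
      have "card S' \<le> card (S l)" using S'(2) fin[OF that(1)] card_mono by blast
      then have "marg f e S' < \<tau> l" using S'(3) that(2) by auto
      moreover have "marg f e (S l) \<le> marg f e S'"
        using marg_anti[OF A(3) A(4) S'(2) SlV eV] .
      ultimately show "marg f e (S l) \<le> \<tau> l" by simp
    qed
    also have "(\<Sum>e\<in>T. \<tau> l) = real (card T) * \<tau> l" by simp
    also have "real (card T) * \<tau> l \<le> real k * \<tau> l"
    proof -
      have "card T \<le> card Opt" unfolding T_def using Opt A(1) finite_subset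
        by (metis Diff_subset card_mono)
      then show ?thesis using Opt tau0[of l] by (intro mult_right_mono) auto
    qed
    finally show ?thesis using ktau[of l] by (simp add: algebra_simps)
  qed
  have Q: "\<forall>\<alpha>\<ge>0. real (\<Sum>j=1..i. kk j) \<ge> real k * (real i / real p + \<alpha>)
              \<longrightarrow> f (S i) \<ge> (1 - q^i + \<alpha> * q^i) * W" if "i \<le> p" for i
    using that
  proof (induction i)
    case 0
    show ?case
    proof (intro allI impI)
      fix \<alpha> :: real assume a: "0 \<le> \<alpha>" "real (\<Sum>j=1..0. kk j) \<ge> real k * (real 0 / real p + \<alpha>)"
      then have "real k * \<alpha> \<le> 0" by simp
      then have "\<alpha> = 0" using a(1) kpos by (simp add: mult_le_0_iff)
      then show "f (S 0) \<ge> (1 - q^0 + \<alpha> * q^0) * W" using A(5) by (simp add: S_def)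
    qed
  next
    case (Suc i)
    have ip: "i < p" "i \<le> p" using Suc.prems by auto
    note IH = Suc.IH[OF ip(2)]
    show ?case
    proof (intro allI impI)
      fix \<alpha> :: real assume a: "0 \<le> \<alpha>"
        "real (\<Sum>j=1..Suc i. kk j) \<ge> real k * (real (Suc i) / real p + \<alpha>)"
      define m where "m = real (\<Sum>j=1..i. kk j)"
      define K where "K = real (kk (Suc i))"
      define x where "x = K / real k"
      define r where "r = 1 / real p"
      define Qi where "Qi = q ^ i"
      have Qi0: "Qi \<ge> 0" using q0 by (simp add: Qi_def)
      have sumS: "real (\<Sum>j=1..Suc i. kk j) = m + K" by (simp add: m_def K_def)
      have Kx: "K = real k * x" using kpos by (simp add: x_def)
      have hyp: "m + real k * x \<ge> real k * (real i / real p + r + \<alpha>)"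
        using a(2) sumS Kx pge by (simp add: r_def add_divide_distrib algebra_simps)
      have g: "f (S (Suc i)) \<ge> f (S i) + x * (Qi * q) * W"
      proof -
        have "real (kk (Suc i)) * \<tau> (Suc i) = x * (Qi * q) * W"
          using kpos by (simp add: x_def K_def \<tau>_def Qi_def mult.commute)
        then show ?thesis using gain[OF ip(1)] by simp
      qed
      have goal_eq: "1 - q ^ Suc i + \<alpha> * q ^ Suc i = 1 - Qi * q + \<alpha> * (Qi * q)"
        by (simp add: Qi_def mult.commute)
      show "f (S (Suc i)) \<ge> (1 - q ^ Suc i + \<alpha> * q ^ Suc i) * W"
      proof (cases "x - r \<le> \<alpha>")
        case True
        define \<alpha>' where "\<alpha>' = \<alpha> - (x - r)"
        have a0: "\<alpha>' \<ge> 0" using True by (simp add: \<alpha>'_def)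
        have "m \<ge> real k * (real i / real p + \<alpha>')"
          using hyp by (simp add: \<alpha>'_def algebra_simps)
        then have fi: "f (S i) \<ge> (1 - Qi + \<alpha>' * Qi) * W" using IH a0 m_def Qi_def by auto
        have "(1 - Qi + (\<alpha> - (x - r)) * Qi) * W + x * (Qi * q) * W
           \<ge> (1 - Qi * q + \<alpha> * (Qi * q)) * W"
          by (rule alg1[OF qr[folded r_def] q0(2) Qi0 W0 True])
        moreover have "f (S i) \<ge> (1 - Qi + (\<alpha> - (x - r)) * Qi) * W" using fi by (simp add: \<alpha>'_def)
        ultimately show ?thesis unfolding goal_eq using g by linarith
      next
        case False
        have rpos: "r > 0" using pge by (simp add: r_def)
        have "card (S i) < k"
        proof (rule ccontr)
          assume "\<not> card (S i) < k"
          then have "kk (Suc i) = 0" using full by simp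
          then have "x = 0" by (simp add: x_def K_def)
          then show False using False a(1) rpos by simp
        qed
        then have fi: "f (S i) \<ge> (1 - Qi) * W" using F2[OF ip(2)] by (simp add: Qi_def)
        have "(1 - Qi) * W + x * (Qi * q) * W \<ge> (1 - Qi * q + \<alpha> * (Qi * q)) * W"
          by (rule alg2[OF qr[folded r_def] q0(1) Qi0 W0]) (use False in simp)
        then show ?thesis unfolding goal_eq using fi g by linarith
      qed
    qed
  qed
  have ip: "i \<le> p" using A(11) by simp
  have hk: "real (\<Sum>j=1..i. kk j) \<ge> real k * (real i / real p + \<alpha>)" using A(13) by (simp add: kk_def)
  have fi: "f (S i) \<ge> (1 - q^i + \<alpha> * q^i) * W" using Q[OF ip] A(12) hk by auto
  have "\<alpha> * q^(i+1) \<le> \<alpha> * q^i"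
    using q0 A(12) by (intro mult_left_mono) (auto intro: mult_left_le_one_le)
  then have "(1 - q^i + \<alpha> * q^(i+1)) * W \<le> (1 - q^i + \<alpha> * q^i) * W"
    using W0 by (intro mult_right_mono) auto
  then show ?thesis using fi by (simp add: S_def q_def W_def)
qed

end
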